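(* For an integer $g$, let $P_{4,g} = \{(x,y,z)\in\mathbb{R}^3 : 2x-y\ge 0,\ x+y-z\ge 0,\ -x+y+z\ge -1,\ -y+2z\ge -1,\ x+y+z=g,\ x\ge 1,\ y\ge 1,\ z\ge 1\}$. Then: (i) $\#(P_{4,g}\cap\mathbb{Z}^3)$ equals $1,3,4,6,7,9$ for $g=3,4,5,6,7,8$ respectively; (ii) if $g \ge 9$, then $\#(P_{4,g}\cap\mathbb{Z}^3) = \#(T_A(g)\cap\mathbb{Z}^2) + \#(T_B(g)\cap\mathbb{Z}^2) + \#(R(g)\cap\mathbb{Z}^2) - \#(T_C(g)\cap\mathbb{Z}^2)$, where $T_A(g) = \{(x,y)\in\mathbb{R}^2 : 3x+y\ge g,\ x\le \frac{2g+1}{8},\ y\le \frac{g}{2}\}$, $T_B(g) = \{(x,y)\in\mathbb{R}^2 : x+3y\ge g-1,\ x\le \frac{g+1}{2},\ y\le \frac{2g-3}{8}\}$, $R(g) = \{(x,y)\in\mathbb{R}^2 : \frac{2g+1}{8}\le x\le \frac{g+1}{2},\ \frac{2g-3}{8}\le y\le \frac{g}{2}\}$, $T_C(g) = \{(x,y)\in\mathbb{R}^2 : x+y\ge g,\ x\le \frac{g+1}{2},\ y\le \frac{g}{2}\}$. *)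

theory Defs
  imports Main Complex_Main
begin

definition P4 :: "int \<Rightarrow> (real \<times> real \<times> real) set" where
  "P4 g = {(x,y,z). 2*x - y \<ge> 0 \<and> x + y - z \<ge> 0 \<and> -x + y + z \<ge> -1 \<and> -y + 2*z \<ge> -1
                 \<and> x + y + z = real_of_int g \<and> x \<ge> 1 \<and> y \<ge> 1 \<and> z \<ge> 1}"

definition TA :: "int \<Rightarrow> (real \<times> real) set" where
  "TA g = {(x,y). 3*x + y \<ge> real_of_int g \<and> x \<le> (2*real_of_int g + 1)/8 \<and> y \<le> real_of_int g / 2}"

definition TB :: "int \<Rightarrow> (real \<times> real) set" where
  "TB g = {(x,y). x + 3*y \<ge> real_of_int g - 1 \<and> x \<le> (real_of_int g + 1)/2 \<and> y \<le> (2*real_of_int g - 3)/8}"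

definition RR :: "int \<Rightarrow> (real \<times> real) set" where
  "RR g = {(x,y). (2*real_of_int g + 1)/8 \<le> x \<and> x \<le> (real_of_int g + 1)/2
               \<and> (2*real_of_int g - 3)/8 \<le> y \<and> y \<le> real_of_int g / 2}"

definition TC :: "int \<Rightarrow> (real \<times> real) set" where
  "TC g = {(x,y). x + y \<ge> real_of_int g \<and> x \<le> (real_of_int g + 1)/2 \<and> y \<le> real_of_int g / 2}"

definition lattice3 :: "(real \<times> real \<times> real) set \<Rightarrow> nat" where
  "lattice3 S = card {p :: int \<times> int \<times> int. (real_of_int (fst p), real_of_int (fst (snd p)), real_of_int (snd (snd p))) \<in> S}"

definition lattice2 :: "(real \<times> real) set \<Rightarrow> nat" where
  "lattice2 S = card {p :: int \<times> int. (real_of_int (fst p), real_of_int (snd p)) \<in> S}"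

end

theory Submission
  imports Defs
begin
definition C :: "int \<Rightarrow> int \<Rightarrow> int \<Rightarrow> bool" where
 "C g x y \<longleftrightarrow> 2*x - y \<ge> 0 \<and> 2*x+2*y \<ge> g \<and> 2*x \<le> g+1 \<and> 2*x+3*y \<le> 2*g+1 \<and> x \<ge> 1 \<and> y \<ge> 1 \<and> x+y \<le> g-1"

lemma memP: "(real_of_int x, real_of_int y, real_of_int z) \<in> P4 g \<longleftrightarrow> z = g - x - y \<and> C g x y"
proof -
  have "(real_of_int x, real_of_int y, real_of_int z) \<in> P4 g \<longleftrightarrow>
     2*x - y \<ge> 0 \<and> x + y - z \<ge> 0 \<and> -x + y + z \<ge> -1 \<and> -y + 2*z \<ge> -1
                 \<and> x + y + z = g \<and> x \<ge> 1 \<and> y \<ge> 1 \<and> z \<ge> 1"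
    unfolding P4_def by (simp, linarith)
  thus ?thesis unfolding C_def by linarith
qed

lemma SP: "{p :: int \<times> int \<times> int. (real_of_int (fst p), real_of_int (fst (snd p)), real_of_int (snd (snd p))) \<in> P4 g}
  = (\<lambda>(x,y). (x,y,g-x-y)) ` Set.filter (\<lambda>(x,y). C g x y) ({1..g}\<times>{1..g})"
  by (auto simp: memP C_def image_iff)

lemma cardP: "lattice3 (P4 g) = card (Set.filter (\<lambda>(x,y). C g x y) ({1..g}\<times>{1..g}))"
  unfolding lattice3_def SP
  by (rule card_image) (auto simp: inj_on_def)

lemma memA: "(real_of_int x, real_of_int y) \<in> TA g \<longleftrightarrow> 3*x+y \<ge> g \<and> 8*x \<le> 2*g+1 \<and> 2*y \<le> g"
proof -
  have "(real_of_int x, real_of_int y) \<in> TA g \<longleftrightarrow> real_of_int (3*x+y) \<ge> real_of_int g \<and> real_of_int (8*x) \<le> real_of_int (2*g+1) \<and> real_of_int (2*y) \<le> real_of_int g"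
    unfolding TA_def by (simp add: field_simps)
  thus ?thesis by (simp only: of_int_le_iff)
qed

lemma memB: "(real_of_int x, real_of_int y) \<in> TB g \<longleftrightarrow> x+3*y \<ge> g-1 \<and> 2*x \<le> g+1 \<and> 8*y \<le> 2*g-3"
proof -
  have "(real_of_int x, real_of_int y) \<in> TB g \<longleftrightarrow> real_of_int (x+3*y) \<ge> real_of_int (g-1) \<and> real_of_int (2*x) \<le> real_of_int (g+1) \<and> real_of_int (8*y) \<le> real_of_int (2*g-3)"
    unfolding TB_def by (simp add: field_simps)
  thus ?thesis by (simp only: of_int_le_iff)
qed

lemma memR: "(real_of_int x, real_of_int y) \<in> RR g \<longleftrightarrow> 2*g+1 \<le> 8*x \<and> 2*x \<le> g+1 \<and> 2*g-3 \<le> 8*y \<and> 2*y \<le> g"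
proof -
  have "(real_of_int x, real_of_int y) \<in> RR g \<longleftrightarrow> real_of_int (2*g+1) \<le> real_of_int (8*x) \<and> real_of_int (2*x) \<le> real_of_int (g+1) \<and> real_of_int (2*g-3) \<le> real_of_int (8*y) \<and> real_of_int (2*y) \<le> real_of_int g"
    unfolding RR_def by (simp add: field_simps)
  thus ?thesis by (simp only: of_int_le_iff)
qed

lemma memC: "(real_of_int x, real_of_int y) \<in> TC g \<longleftrightarrow> x+y \<ge> g \<and> 2*x \<le> g+1 \<and> 2*y \<le> g"
proof -
  have "(real_of_int x, real_of_int y) \<in> TC g \<longleftrightarrow> real_of_int (x+y) \<ge> real_of_int g \<and> real_of_int (2*x) \<le> real_of_int (g+1) \<and> real_of_int (2*y) \<le> real_of_int g"
    unfolding TC_def by (simp add: field_simps)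
  thus ?thesis by (simp only: of_int_le_iff)
qed

lemma part2:
  fixes g :: int assumes g: "g \<ge> 9"
  shows "int (lattice3 (P4 g)) = int (lattice2 (TA g)) + int (lattice2 (TB g)) + int (lattice2 (RR g))
                                   - int (lattice2 (TC g))"
proof -
  define A where "A = {p::int\<times>int. (real_of_int (fst p), real_of_int (snd p)) \<in> TA g}"
  define B where "B = {p::int\<times>int. (real_of_int (fst p), real_of_int (snd p)) \<in> TB g}"
  define R where "R = {p::int\<times>int. (real_of_int (fst p), real_of_int (snd p)) \<in> RR g}"
  define D where "D = {p::int\<times>int. (real_of_int (fst p), real_of_int (snd p)) \<in> TC g}"
  define Q where "Q = {(x::int,y::int). 2*x \<le> g+1 \<and> 2*y \<le> g \<and> 3*x+y \<ge> g \<and> x+3*y \<ge> g-1 \<and> x+y \<le> g-1}"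
  have A: "A = {(x,y). 3*x+y \<ge> g \<and> 8*x \<le> 2*g+1 \<and> 2*y \<le> g}" unfolding A_def by (auto simp: memA)
  have B: "B = {(x,y). x+3*y \<ge> g-1 \<and> 2*x \<le> g+1 \<and> 8*y \<le> 2*g-3}" unfolding B_def by (auto simp: memB)
  have R: "R = {(x,y). 2*g+1 \<le> 8*x \<and> 2*x \<le> g+1 \<and> 2*g-3 \<le> 8*y \<and> 2*y \<le> g}" unfolding R_def by (auto simp: memR)
  have D: "D = {(x,y). x+y \<ge> g \<and> 2*x \<le> g+1 \<and> 2*y \<le> g}" unfolding D_def by (auto simp: memC)
  have box: "A \<subseteq> {0..g}\<times>{0..g}" "B \<subseteq> {0..g}\<times>{0..g}" "R \<subseteq> {0..g}\<times>{0..g}" "D \<subseteq> {0..g}\<times>{0..g}"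
    using g unfolding A B R D by auto
  have fin: "finite A" "finite B" "finite R" "finite D"
    using box by (auto intro: finite_subset)
  have dAB: "A \<inter> B = {}" unfolding A B by (auto; presburger)
  have dAR: "(A \<union> B) \<inter> R = {}" unfolding A B R by (auto; presburger)
  have sub: "D \<subseteq> A \<union> B \<union> R" using g unfolding A B R D by (auto; presburger)
  have UQ: "A \<union> B \<union> R - D = Q" using g unfolding A B R D Q_def by (auto; presburger)
  have cU: "card (A \<union> B \<union> R) = card A + card B + card R"
    using fin dAB dAR by (simp add: card_Un_disjoint)
  have cQ: "card Q = card A + card B + card R - card D"
    using UQ cU card_Diff_subset[OF fin(4) sub] by simp
  have cDle: "card D \<le> card (A \<union> B \<union> R)"
    using sub fin by (intro card_mono) auto
  have img: "(\<lambda>(x,y). (x, g-x-y)) ` Set.filter (\<lambda>(x,y). C g x y) ({1..g}\<times>{1..g}) = Q"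
  proof
    show "(\<lambda>(x,y). (x, g-x-y)) ` Set.filter (\<lambda>(x,y). C g x y) ({1..g}\<times>{1..g}) \<subseteq> Q"
      unfolding Q_def C_def by auto
    show "Q \<subseteq> (\<lambda>(x,y). (x, g-x-y)) ` Set.filter (\<lambda>(x,y). C g x y) ({1..g}\<times>{1..g})"
    proof
      fix p assume "p \<in> Q"
      then obtain x z where p: "p = (x,z)" and h: "2*x \<le> g+1" "2*z \<le> g" "3*x+z \<ge> g" "x+3*z \<ge> g-1" "x+z \<le> g-1"
        unfolding Q_def by auto
      have "(x, g-x-z) \<in> Set.filter (\<lambda>(x,y). C g x y) ({1..g}\<times>{1..g})"
        using h g unfolding C_def by auto
      moreover have "p = (\<lambda>(x,y). (x, g-x-y)) (x, g-x-z)" using p by simp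
      ultimately show "p \<in> (\<lambda>(x,y). (x, g-x-y)) ` Set.filter (\<lambda>(x,y). C g x y) ({1..g}\<times>{1..g})"
        by blast
    qed
  qed
  have "card Q = lattice3 (P4 g)"
    unfolding cardP img[symmetric]
    by (rule card_image) (auto simp: inj_on_def)
  hence "lattice3 (P4 g) = card A + card B + card R - card D" using cQ by simp
  thus ?thesis using cDle cU unfolding lattice2_def A_def[symmetric] B_def[symmetric] R_def[symmetric] D_def[symmetric]
    by simp
qed

theorem mainTheorem7:
  shows "(lattice3 (P4 3) = 1 \<and> lattice3 (P4 4) = 3 \<and> lattice3 (P4 5) = 4 \<and>
          lattice3 (P4 6) = 6 \<and> lattice3 (P4 7) = 7 \<and> lattice3 (P4 8) = 9) \<and>
         (\<forall>g::int. g \<ge> 9 \<longrightarrow>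
           int (lattice3 (P4 g)) = int (lattice2 (TA g)) + int (lattice2 (TB g)) + int (lattice2 (RR g))
                                   - int (lattice2 (TC g)))"
proof -
  have "lattice3 (P4 3) = 1 \<and> lattice3 (P4 4) = 3 \<and> lattice3 (P4 5) = 4 \<and>
          lattice3 (P4 6) = 6 \<and> lattice3 (P4 7) = 7 \<and> lattice3 (P4 8) = 9"
    unfolding cardP set_upto[symmetric] by code_simp
  thus ?thesis using part2 by blast
qed
end
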